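(* Let $k,r,\delta$ be positive integers, let $n=\lceil k/r\rceil(r+\delta-1)$ and $d = n-k+1-\left(\lceil k/r\rceil-1\right)(\delta-1)$, and assume $\delta\le d$. Then for every prime power $q>n$ there exists an explicit $[n,k,d]$ linear code over $\mathbb{F}_q$ with all-symbol locality $(r,\delta)$; in particular its minimum distance attains $d = n-k+1-\left(\lceil k/r\rceil-1\right)(\delta-1)$.
   Context: Coordinate $i$ of a linear code $\mathcal{C}$ of length $n$ has locality $(r,\delta)$ if there is $S_i\subseteq[n]$ with $i\in S_i$, $|S_i|\le r+\delta-1$, such that the punctured code $\mathcal{C}|_{S_i}$ (delete coordinates outside $S_i$) has minimum distance at least $\delta$. A code has all-symbol locality $(r,\delta)$ (is an $(r,\delta)_a$ code) if every one of its $n$ coordinates has locality $(r,\delta)$. For such codes the minimum distance is at most $n-k+1-(\lceil k/r\rceil-1)(\delta-1)$; a code attaining this is called optimal. *)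

theory Defs
  imports Complex_Main "HOL-Library.Function_Algebras"
begin

text \<open>Words of length n over a field 'a are modelled as functions nat \<Rightarrow> 'a that vanish
  outside the index set {0..<n}.  Scalar multiplication is pointwise.\<close>

definition vscale :: "'a::field \<Rightarrow> (nat \<Rightarrow> 'a) \<Rightarrow> (nat \<Rightarrow> 'a)" where
  "vscale c x = (\<lambda>i. c * x i)"

definition words :: "nat \<Rightarrow> (nat \<Rightarrow> 'a::zero) set" where
  "words n = {x. \<forall>i\<ge>n. x i = 0}"

definition linear_code :: "nat \<Rightarrow> (nat \<Rightarrow> 'a::field) set \<Rightarrow> bool" where
  "linear_code n C \<longleftrightarrow> C \<subseteq> words n \<and> module.subspace vscale C"

definition code_dim :: "(nat \<Rightarrow> 'a::field) set \<Rightarrow> nat" where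
  "code_dim C = vector_space.dim vscale C"

text \<open>Hamming weight (words have finite support in our setting).\<close>
definition wt :: "(nat \<Rightarrow> 'a::zero) \<Rightarrow> nat" where
  "wt x = card {i. x i \<noteq> 0}"

definition min_dist :: "(nat \<Rightarrow> 'a::zero) set \<Rightarrow> nat" where
  "min_dist C = Min {wt x | x. x \<in> C \<and> x \<noteq> 0}"

text \<open>Puncturing: keep coordinates in S, delete (zero out) the others.\<close>
definition puncture :: "(nat \<Rightarrow> 'a::zero) set \<Rightarrow> nat set \<Rightarrow> (nat \<Rightarrow> 'a) set" where
  "puncture C S = (\<lambda>x. (\<lambda>i. if i \<in> S then x i else 0)) ` C"

text \<open>"Minimum distance at least delta"; a zero code has minimum distance infinity.\<close>
definition min_dist_ge :: "(nat \<Rightarrow> 'a::zero) set \<Rightarrow> nat \<Rightarrow> bool" where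
  "min_dist_ge C \<delta> \<longleftrightarrow> (\<forall>x\<in>C. x \<noteq> 0 \<longrightarrow> \<delta> \<le> wt x)"

definition has_locality :: "nat \<Rightarrow> (nat \<Rightarrow> 'a::zero) set \<Rightarrow> nat \<Rightarrow> nat \<Rightarrow> nat \<Rightarrow> bool" where
  "has_locality n C r \<delta> i \<longleftrightarrow>
     (\<exists>S. S \<subseteq> {0..<n} \<and> i \<in> S \<and> card S \<le> r + \<delta> - 1 \<and> min_dist_ge (puncture C S) \<delta>)"

definition all_symbol_locality :: "nat \<Rightarrow> (nat \<Rightarrow> 'a::zero) set \<Rightarrow> nat \<Rightarrow> nat \<Rightarrow> bool" where
  "all_symbol_locality n C r \<delta> \<longleftrightarrow> (\<forall>i<n. has_locality n C r \<delta> i)"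

end

theory Submission imports Defs "HOL-Computational_Algebra.Polynomial" begin

lemma vandermonde_zero:
  fixes \<alpha> :: "nat \<Rightarrow> 'a::field" and c :: "nat \<Rightarrow> 'a"
  assumes fin: "finite T" and inj: "inj_on \<alpha> T"
    and eq: "\<And>t. t < card T \<Longrightarrow> (\<Sum>i\<in>T. c i * \<alpha> i ^ t) = 0"
    and b: "b \<in> T"
  shows "c b = 0"
proof -
  define h where "h = (\<Prod>a\<in>T-{b}. [:- \<alpha> a, 1:])"
  have ph: "poly h x = (\<Prod>a\<in>T-{b}. x - \<alpha> a)" for x
    unfolding h_def by (simp add: poly_prod)
  have "degree h \<le> (\<Sum>a\<in>T-{b}. degree [:- \<alpha> a, 1:])"
    unfolding h_def using degree_prod_sum_le[of "T-{b}" "\<lambda>a. [:- \<alpha> a, 1:]"] fin by (simp add: o_def)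
  also have "\<dots> = card (T - {b})" by simp
  finally have dh: "degree h < card T"
    using fin b by (metis card_Diff1_less le_less_trans)
  have "(\<Sum>i\<in>T. c i * poly h (\<alpha> i)) = (\<Sum>i\<in>T. c i * (\<Sum>t\<le>degree h. coeff h t * \<alpha> i ^ t))"
    by (simp add: poly_altdef)
  also have "\<dots> = (\<Sum>t\<le>degree h. coeff h t * (\<Sum>i\<in>T. c i * \<alpha> i ^ t))"
    by (simp add: sum_distrib_left sum_distrib_right mult_ac sum.swap[of _ T])
  also have "\<dots> = 0" using dh by (intro sum.neutral) (auto simp: eq)
  finally have s0: "(\<Sum>i\<in>T. c i * poly h (\<alpha> i)) = 0" .
  have z: "poly h (\<alpha> i) = 0" if "i \<in> T" "i \<noteq> b" for i
    unfolding ph using fin that by (intro prod_zero) auto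
  have nz: "poly h (\<alpha> b) \<noteq> 0"
    unfolding ph using fin inj b by (auto simp: inj_on_def)
  have "(\<Sum>i\<in>T. c i * poly h (\<alpha> i)) = c b * poly h (\<alpha> b)"
    using fin b z by (subst sum.remove[of _ b]) (auto intro!: sum.neutral)
  with s0 nz show ?thesis by simp
qed

lemma solve_system:
  fixes a :: "'e \<Rightarrow> nat \<Rightarrow> 'a::field"
  assumes "finite E" "finite U" "card E < card U"
  shows "\<exists>x. (\<forall>i. i \<notin> U \<longrightarrow> x i = 0) \<and> (\<exists>i\<in>U. x i \<noteq> 0) \<and> (\<forall>e\<in>E. (\<Sum>i\<in>U. a e i * x i) = 0)"
  using assms
proof (induction E arbitrary: U a rule: finite_induct)
  case empty
  then obtain u where "u \<in> U" by (metis card.empty card_gt_0_iff ex_in_conv)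
  then show ?case by (intro exI[of _ "\<lambda>i. if i = u then 1 else 0"]) auto
next
  case (insert e0 E U a)
  show ?case
  proof (cases "\<forall>i\<in>U. a e0 i = 0")
    case True
    from insert.IH[of U a] insert.prems insert.hyps obtain x where
      x: "\<forall>i. i \<notin> U \<longrightarrow> x i = 0" "\<exists>i\<in>U. x i \<noteq> 0" "\<forall>e\<in>E. (\<Sum>i\<in>U. a e i * x i) = 0"
      by auto
    show ?thesis using x True by (intro exI[of _ x]) auto
  next
    case False
    then obtain v where v: "v \<in> U" "a e0 v \<noteq> 0" by auto
    define a' where "a' e i = a e i - a e v / a e0 v * a e0 i" for e i
    have "card E < card (U - {v})" using insert.prems insert.hyps v by simp
    with insert.IH[of "U - {v}" a'] insert.prems obtain x' where
      x': "\<forall>i. i \<notin> U - {v} \<longrightarrow> x' i = 0" "\<exists>i\<in>U-{v}. x' i \<noteq> 0"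
          "\<forall>e\<in>E. (\<Sum>i\<in>U-{v}. a' e i * x' i) = 0"
      by auto
    define S0 where "S0 = (\<Sum>i\<in>U-{v}. a e0 i * x' i)"
    define x where "x = x'(v := - S0 / a e0 v)"
    have sU: "(\<Sum>i\<in>U. a e i * x i) = a e v * x v + (\<Sum>i\<in>U-{v}. a e i * x' i)" for e
      using insert.prems v by (subst sum.remove[of _ v]) (auto simp: x_def intro!: sum.cong)
    have "x i = 0" if "i \<notin> U" for i using x' that v by (auto simp: x_def)
    moreover have "\<exists>i\<in>U. x i \<noteq> 0" using x' by (auto simp: x_def)
    moreover have "(\<Sum>i\<in>U. a e0 i * x i) = 0"
      using v by (subst sU) (simp add: S0_def[symmetric] x_def)
    moreover have "(\<Sum>i\<in>U. a e i * x i) = 0" if e: "e \<in> E" for e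
    proof -
      have "(\<Sum>i\<in>U-{v}. a e i * x' i) = (\<Sum>i\<in>U-{v}. a' e i * x' i + a e v / a e0 v * (a e0 i * x' i))"
        by (intro sum.cong) (auto simp: a'_def algebra_simps)
      also have "\<dots> = a e v / a e0 v * S0"
        using x'(3) e by (simp add: sum.distrib sum_distrib_left S0_def)
      finally have "(\<Sum>i\<in>U-{v}. a e i * x' i) = a e v / a e0 v * S0" .
      then show ?thesis using v by (subst sU) (simp add: x_def field_simps)
    qed
    ultimately show ?thesis by (intro exI[of _ x]) auto
  qed
qed


lemma vs_vscale: "vector_space (vscale :: 'a::field \<Rightarrow> (nat \<Rightarrow> 'a) \<Rightarrow> _)"
  by unfold_locales (auto simp: vscale_def fun_eq_iff algebra_simps)

interpretation vs: vector_space "vscale :: 'a::field \<Rightarrow> (nat \<Rightarrow> 'a) \<Rightarrow> _"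
  by (rule vs_vscale)

lemma sum_fun_apply: "(sum f A) x = (\<Sum>a\<in>A. f a x)" for f :: "'b \<Rightarrow> nat \<Rightarrow> 'a::comm_monoid_add"
  by (induction A rule: infinite_finite_induct) auto

lemma vscale_apply[simp]: "vscale c x i = c * x i" by (simp add: vscale_def)

lemma sum_blocks: "(\<Sum>i\<in>{0..<m*g}. f i) = (\<Sum>j<m. \<Sum>i\<in>{j*g..<j*g+g}. f i)"
  for f :: "nat \<Rightarrow> 'a::comm_monoid_add"
proof (induction m)
  case 0 then show ?case by simp
next
  case (Suc m)
  have "(\<Sum>i\<in>{0..<Suc m*g}. f i) = (\<Sum>i\<in>{0..<m*g}. f i) + (\<Sum>i\<in>{m*g..<m*g+g}. f i)"
  proof -
    have "Suc m * g = m*g+g" by simp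
    then show ?thesis by (simp only:) (rule sum.atLeastLessThan_concat[symmetric]; simp)
  qed
  then show ?case using Suc by simp
qed

lemma div_block: "0 < g \<Longrightarrow> (i div g = j) \<longleftrightarrow> (j*g \<le> i \<and> i < j*g+g)" for i j g :: nat
proof
  assume "0 < g" "i div g = j"
  then show "j*g \<le> i \<and> i < j*g+g"
    by (metis add.commute div_times_less_eq_dividend dividend_less_div_times mult.commute)
next
  assume "0 < g" "j*g \<le> i \<and> i < j*g+g"
  then show "i div g = j" by (simp add: div_nat_eqI mult.commute)
qed

locale lrc =
  fixes \<alpha> :: "nat \<Rightarrow> 'a::field" and m g \<delta> e :: nat
  assumes inj: "inj_on \<alpha> {0..<m*g}" and dpos: "0 < \<delta>" and dle: "\<delta> + e \<le> g" and mpos: "0 < m"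
begin

definition "n = m * g"
definition "d = \<delta> + e"
definition "Q = {q. q < n \<and> (q mod g < \<delta> - 1 \<or> q < d - 1)}"
definition "coef q i = (if q mod g < \<delta> - 1 then (if q div g = i div g then \<alpha> i ^ (q mod g) else 0) else \<alpha> i ^ q)"
definition "C = {c \<in> words n. \<forall>q\<in>Q. (\<Sum>i\<in>{0..<n}. coef q i * c i) = 0}"

lemma gpos: "0 < g" using dpos dle by simp

lemma C_supp: "c \<in> C \<Longrightarrow> {i. c i \<noteq> 0} \<subseteq> {0..<n}"
  by (auto simp: C_def words_def) (meson not_le)

lemma Lloc: assumes c: "c \<in> C" and j: "j < m" and t: "t < \<delta> - 1"
  shows "(\<Sum>i\<in>{j*g..<j*g+g}. c i * \<alpha> i ^ t) = 0"
proof -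
  define q where "q = j*g + t"
  have tg: "t < g" using t dle by simp
  have qm: "q mod g = t" "q div g = j" using tg by (auto simp: q_def)
  have "q < n"
  proof -
    have "j*g+g \<le> m*g" using mult_le_mono1[of "Suc j" m g] j by simp
    then show ?thesis using tg by (simp add: q_def n_def)
  qed
  then have "q \<in> Q" using qm t by (simp add: Q_def)
  then have "(\<Sum>i\<in>{0..<n}. coef q i * c i) = 0" using c by (simp add: C_def)
  also have "(\<Sum>i\<in>{0..<n}. coef q i * c i) = (\<Sum>i\<in>{0..<n}. if i \<in> {j*g..<j*g+g} then c i * \<alpha> i ^ t else 0)"
  proof (intro sum.cong refl)
    fix i assume "i \<in> {0..<n}"
    have "coef q i = (if q div g = i div g then \<alpha> i ^ t else 0)" using t by (simp add: coef_def qm)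
    then show "coef q i * c i = (if i \<in> {j*g..<j*g+g} then c i * \<alpha> i ^ t else 0)"
    proof -
      have "(i \<in> {j*g..<j*g+g}) = (j = i div g)" using div_block[OF gpos, of i j] by auto
      then show ?thesis using \<open>coef q i = _\<close> qm(2) by (simp add: mult.commute)
    qed
  qed
  also have "\<dots> = (\<Sum>i\<in>{0..<n} \<inter> {j*g..<j*g+g}. c i * \<alpha> i ^ t)"
    by (rule sum.inter_restrict[symmetric]) simp
  also have "{0..<n} \<inter> {j*g..<j*g+g} = {j*g..<j*g+g}"
  proof -
    have "j*g+g \<le> m*g" using mult_le_mono1[of "Suc j" m g] j by simp
    then show ?thesis by (auto simp: n_def)
  qed
  finally show ?thesis .
qed

lemma Gall: assumes c: "c \<in> C" and t: "t < d - 1"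
  shows "(\<Sum>i\<in>{0..<n}. c i * \<alpha> i ^ t) = 0"
proof (cases "t < \<delta> - 1")
  case True
  have "(\<Sum>i\<in>{0..<n}. c i * \<alpha> i ^ t) = (\<Sum>j<m. \<Sum>i\<in>{j*g..<j*g+g}. c i * \<alpha> i ^ t)"
    unfolding n_def by (rule sum_blocks)
  also have "\<dots> = 0" using Lloc[OF c _ True] by simp
  finally show ?thesis .
next
  case False
  have tg: "t < g" using t dle by (simp add: d_def)
  have "g \<le> n" using mpos by (simp add: n_def)
  then have "t < n" using tg by simp
  then have "t \<in> Q" using t by (simp add: Q_def)
  then have "(\<Sum>i\<in>{0..<n}. coef t i * c i) = 0" using c by (simp add: C_def)
  moreover have "coef t i = \<alpha> i ^ t" for i using False tg by (simp add: coef_def)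
  ultimately show ?thesis by (simp add: mult.commute[of "c _"])
qed

lemma Dist: assumes c: "c \<in> C" and w: "card {i. c i \<noteq> 0} < d" shows "c = 0"
proof -
  define T where "T = {i. c i \<noteq> 0}"
  have Tn: "T \<subseteq> {0..<n}" using C_supp[OF c] by (simp add: T_def)
  have fT: "finite T" using Tn finite_subset by blast
  have iT: "inj_on \<alpha> T" using inj_on_subset[OF inj] Tn by (simp add: n_def)
  have "c b = 0" if "b \<in> T" for b
  proof (rule vandermonde_zero[OF fT iT _ that])
    fix t assume "t < card T"
    then have "t < d - 1" using w T_def by simp
    have "(\<Sum>i\<in>T. c i * \<alpha> i ^ t) = (\<Sum>i\<in>{0..<n}. c i * \<alpha> i ^ t)"
      using Tn by (intro sum.mono_neutral_left) (auto simp: T_def)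
    also have "\<dots> = 0" using Gall[OF c \<open>t < d - 1\<close>] .
    finally show "(\<Sum>i\<in>T. c i * \<alpha> i ^ t) = 0" .
  qed
  then show ?thesis by (auto simp: T_def fun_eq_iff)
qed

lemma Loc: assumes c: "c \<in> C" and j: "j < m" and w: "card ({i. c i \<noteq> 0} \<inter> {j*g..<j*g+g}) < \<delta>"
  shows "\<forall>i\<in>{j*g..<j*g+g}. c i = 0"
proof -
  define T where "T = {i. c i \<noteq> 0} \<inter> {j*g..<j*g+g}"
  have Tn: "T \<subseteq> {0..<n}" using C_supp[OF c] by (auto simp: T_def)
  have fT: "finite T" using Tn finite_subset by blast
  have iT: "inj_on \<alpha> T" using inj_on_subset[OF inj] Tn by (simp add: n_def)
  have "c b = 0" if "b \<in> T" for b
  proof (rule vandermonde_zero[OF fT iT _ that])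
    fix t assume "t < card T"
    then have "t < \<delta> - 1" using w T_def by simp
    have "(\<Sum>i\<in>T. c i * \<alpha> i ^ t) = (\<Sum>i\<in>{j*g..<j*g+g}. c i * \<alpha> i ^ t)"
      by (intro sum.mono_neutral_left) (auto simp: T_def)
    also have "\<dots> = 0" using Lloc[OF c j \<open>t < \<delta> - 1\<close>] .
    finally show "(\<Sum>i\<in>T. c i * \<alpha> i ^ t) = 0" .
  qed
  then show ?thesis unfolding T_def by blast
qed


lemma C_words: "c \<in> C \<Longrightarrow> i \<ge> n \<Longrightarrow> c i = 0"
  by (auto simp: C_def words_def)

lemma subC: "vs.subspace C"
proof (rule vs.subspaceI)
  show "0 \<in> C" by (simp add: C_def words_def)
next
  fix x y assume "x \<in> C" "y \<in> C"
  then show "x + y \<in> C"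
    by (auto simp: C_def words_def distrib_left sum.distrib)
next
  fix c x assume "x \<in> C"
  then show "vscale c x \<in> C"
  proof -
    have "(\<Sum>i\<in>{0..<n}. coef q i * (c * x i)) = c * (\<Sum>i\<in>{0..<n}. coef q i * x i)" for q
      by (simp add: sum_distrib_left mult_ac)
    then show ?thesis using \<open>x \<in> C\<close> by (auto simp: C_def words_def)
  qed
qed

lemma gn: "g \<le> n" using mpos by (simp add: n_def)

lemma injQ: assumes c: "c \<in> C" and z: "\<And>i. i \<notin> Q \<Longrightarrow> c i = 0" shows "c = 0"
proof -
  have blk: "\<forall>i\<in>{j*g..<j*g+g}. c i = 0" if j: "1 \<le> j" "j < m" for j
  proof (rule Loc[OF c \<open>j < m\<close>])
    have "{i. c i \<noteq> 0} \<inter> {j*g..<j*g+g} \<subseteq> {j*g..<j*g+(\<delta>-1)}"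
    proof
      fix i assume i: "i \<in> {i. c i \<noteq> 0} \<inter> {j*g..<j*g+g}"
      then have "i \<in> Q" using z by auto
      have "g \<le> j*g" using j by simp
      then have "g \<le> i" using le_trans[OF \<open>g \<le> j*g\<close>] i by auto
      then have "\<not> i < d - 1" using dle by (simp add: d_def)
      then have "i mod g < \<delta> - 1" using \<open>i \<in> Q\<close> by (simp add: Q_def)
      moreover have "i div g = j" using i div_block[OF gpos] by auto
      moreover have "i = i div g * g + i mod g" by simp
      ultimately show "i \<in> {j*g..<j*g+(\<delta>-1)}" using i by auto
    qed
    then have "card ({i. c i \<noteq> 0} \<inter> {j*g..<j*g+g}) \<le> \<delta> - 1"
      by (metis card_atLeastLessThan card_mono finite_atLeastLessThan add_diff_cancel_left')
    then show "card ({i. c i \<noteq> 0} \<inter> {j*g..<j*g+g}) < \<delta>" using dpos by simp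
  qed
  have "{i. c i \<noteq> 0} \<subseteq> {0..<d-1}"
  proof
    fix i assume i: "i \<in> {i. c i \<noteq> 0}"
    then have "i < n" using C_words[OF c] not_le by auto
    define j where "j = i div g"
    have ij: "j*g \<le> i \<and> i < j*g+g" using div_block[OF gpos] j_def by auto
    have "j < m" using \<open>i < n\<close> gpos by (simp add: j_def n_def less_mult_imp_div_less)
    have "j = 0"
    proof (rule ccontr)
      assume "j \<noteq> 0"
      then show False using blk[of j] \<open>j < m\<close> ij i by auto
    qed
    then have "i < g" using ij by simp
    then have "i mod g = i" by simp
    moreover have "i \<in> Q" using z i by auto
    ultimately show "i \<in> {0..<d-1}" using dle by (auto simp: Q_def d_def)
  qed
  then have "card {i. c i \<noteq> 0} \<le> d - 1" by (metis card_atLeastLessThan card_mono finite_atLeastLessThan minus_nat.diff_0)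
  then have "card {i. c i \<noteq> 0} < d" using dpos by (simp add: d_def)
  then show ?thesis using Dist[OF c] by simp
qed

lemma card_Q: "card Q = m * (\<delta> - 1) + e"
proof -
  define Q1 where "Q1 = {q. q < n \<and> q mod g < \<delta> - 1}"
  have QU: "Q = Q1 \<union> {\<delta>-1..<d-1}"
  proof -
    have "q \<in> Q" if "\<delta>-1 \<le> q" "q < d-1" for q
      using that gn dle by (auto simp: Q_def d_def)
    moreover have "\<delta>-1 \<le> q" if "q \<in> Q" "q \<notin> Q1" for q
    proof (rule ccontr)
      assume "\<not> \<delta>-1 \<le> q"
      then have "q < g" using dle by simp
      then show False using that \<open>\<not> \<delta>-1 \<le> q\<close> by (auto simp: Q_def Q1_def)
    qed
    moreover have "q mod g = q" if "q < \<delta> - 1" for q using that dle by simp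
    ultimately show ?thesis by (auto simp: Q_def Q1_def)
  qed
  have disj: "Q1 \<inter> {\<delta>-1..<d-1} = {}"
  proof -
    have "q \<notin> Q1" if "\<delta>-1 \<le> q" "q < d-1" for q
    proof -
      have "q < g" using that dle by (simp add: d_def)
      then show ?thesis using that by (simp add: Q1_def)
    qed
    then show ?thesis by auto
  qed
  define f where "f = (\<lambda>(j,t). j*g + t)"
  have imf: "f ` ({0..<m} \<times> {0..<\<delta>-1}) = Q1"
  proof
    show "f ` ({0..<m} \<times> {0..<\<delta>-1}) \<subseteq> Q1"
    proof clarify
      fix j t assume jt: "j \<in> {0..<m}" "t \<in> {0..<\<delta>-1}"
      have "t < g" using jt dle by simp
      moreover have "j*g+g \<le> m*g" using mult_le_mono1[of "Suc j" m g] jt by simp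
      ultimately show "f (j,t) \<in> Q1" using jt by (simp add: f_def Q1_def n_def)
    qed
  next
    show "Q1 \<subseteq> f ` ({0..<m} \<times> {0..<\<delta>-1})"
    proof
      fix q assume q: "q \<in> Q1"
      have "q = f (q div g, q mod g)" by (simp add: f_def)
      moreover have "q div g < m" using q gpos by (simp add: Q1_def n_def less_mult_imp_div_less)
      ultimately show "q \<in> f ` ({0..<m} \<times> {0..<\<delta>-1})" using q by (force simp: Q1_def)
    qed
  qed
  have "inj_on f ({0..<m} \<times> {0..<\<delta>-1})"
  proof (rule inj_onI)
    fix p p' assume a0: "p \<in> {0..<m} \<times> {0..<\<delta>-1}" "p' \<in> {0..<m} \<times> {0..<\<delta>-1}" "f p = f p'"
    obtain j t where p: "p = (j,t)" by fastforce
    obtain j' t' where p': "p' = (j',t')" by fastforce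
    have a: "(j,t) \<in> {0..<m} \<times> {0..<\<delta>-1}" "(j',t') \<in> {0..<m} \<times> {0..<\<delta>-1}" "f (j,t) = f (j',t')"
      using a0 p p' by auto
    have "t < g" "t' < g" using a dle by auto
    then have "f (j,t) div g = j" "f (j',t') div g = j'" "f (j,t) mod g = t" "f (j',t') mod g = t'"
      by (auto simp: f_def)
    then show "p = p'" using a(3) p p' by metis
  qed
  then have "card Q1 = m * (\<delta>-1)" using imf card_image by (metis card_atLeastLessThan card_cartesian_product diff_zero)
  moreover have "finite Q1" by (simp add: Q1_def)
  ultimately show ?thesis using QU disj dpos by (simp add: card_Un_disjoint d_def)
qed

lemma Q_sub: "Q \<subseteq> {0..<n}" by (auto simp: Q_def)

lemma weight_d: "\<exists>x\<in>C. x \<noteq> 0 \<and> wt x = d"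
proof -
  have "finite {0..<d-1}" "finite {0..<d}" "card {0..<d-1} < card {0..<d}" using dpos by (auto simp: d_def)
  from solve_system[OF this, of coef] obtain x where
    x: "\<forall>i. i \<notin> {0..<d} \<longrightarrow> x i = 0" "\<exists>i\<in>{0..<d}. x i \<noteq> 0" "\<forall>q\<in>{0..<d-1}. (\<Sum>i\<in>{0..<d}. coef q i * x i) = 0"
    by blast
  have dn: "d \<le> n" using dle gn by (simp add: d_def)
  have sx: "(\<Sum>i\<in>{0..<n}. coef q i * x i) = (\<Sum>i\<in>{0..<d}. coef q i * x i)" for q
    using dn x(1) by (intro sum.mono_neutral_right) auto
  have "x \<in> C"
  proof -
    have "x \<in> words n" using x(1) dn by (auto simp: words_def)
    moreover have "(\<Sum>i\<in>{0..<n}. coef q i * x i) = 0" if q: "q \<in> Q" for q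
    proof (cases "q < d - 1")
      case True then show ?thesis using x(3) sx by simp
    next
      case False
      then have qm: "q mod g < \<delta> - 1" using q by (simp add: Q_def)
      have "g \<le> q"
      proof (rule ccontr)
        assume "\<not> g \<le> q" then have "q mod g = q" by simp
        then show False using qm False by (simp add: d_def)
      qed
      then have "q div g \<noteq> 0" using gpos by (simp add: div_eq_0_iff)
      moreover have "i div g = 0" if "i < d" for i using that dle by (simp add: d_def)
      ultimately have "(\<Sum>i\<in>{0..<d}. coef q i * x i) = 0"
        using qm by (intro sum.neutral) (auto simp: coef_def)
      then show ?thesis using sx by simp
    qed
    ultimately show ?thesis by (simp add: C_def)
  qed
  moreover have "x \<noteq> 0" using x(2) by auto
  moreover have "wt x = d"
  proof -
    have "{i. x i \<noteq> 0} \<subseteq> {0..<d}" using x(1) by auto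
    then have "wt x \<le> d" unfolding wt_def by (metis card_atLeastLessThan card_mono finite_atLeastLessThan minus_nat.diff_0)
    moreover have "\<not> wt x < d" using Dist[OF \<open>x \<in> C\<close>] \<open>x \<noteq> 0\<close> by (auto simp: wt_def)
    ultimately show ?thesis by simp
  qed
  ultimately show ?thesis by blast
qed


lemma dim_C: "vs.dim C = n - card Q"
proof -
  define P where "P = {0..<n} - Q"
  have fQ: "finite Q" using Q_sub finite_subset by blast
  have ex: "\<exists>y. y \<in> C \<and> y p = 1 \<and> (\<forall>i. i \<notin> insert p Q \<longrightarrow> y i = 0)" if p: "p \<in> P" for p
  proof -
    have "card Q < card (insert p Q)" using p fQ by (simp add: P_def)
    from solve_system[OF fQ _ this, of coef] fQ obtain x where
      x: "\<forall>i. i \<notin> insert p Q \<longrightarrow> x i = 0" "\<exists>i\<in>insert p Q. x i \<noteq> 0"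
         "\<forall>q\<in>Q. (\<Sum>i\<in>insert p Q. coef q i * x i) = 0" by auto
    have U: "insert p Q \<subseteq> {0..<n}" using p Q_sub by (auto simp: P_def)
    have "x \<in> C"
    proof -
      have "x \<in> words n" unfolding words_def
      proof (intro CollectI allI impI)
        fix i assume "n \<le> i"
        then have "i \<notin> insert p Q" using U by auto
        then show "x i = 0" using x(1) by blast
      qed
      moreover have "(\<Sum>i\<in>{0..<n}. coef q i * x i) = (\<Sum>i\<in>insert p Q. coef q i * x i)" for q
        using U x(1) by (intro sum.mono_neutral_right) auto
      ultimately show ?thesis using x(3) by (simp add: C_def)
    qed
    have "x p \<noteq> 0"
    proof
      assume "x p = 0"
      then have "x i = 0" if "i \<notin> Q" for i using x(1) that by (cases "i = p") auto
      then have "x = 0" using injQ[OF \<open>x \<in> C\<close>] by blast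
      then show False using x(2) by simp
    qed
    show ?thesis
      using vs.subspace_scale[OF subC \<open>x \<in> C\<close>, of "1 / x p"] \<open>x p \<noteq> 0\<close> x(1)
      by (intro exI[of _ "vscale (1 / x p) x"]) auto
  qed
  then obtain cp where cp: "\<And>p. p \<in> P \<Longrightarrow> cp p \<in> C \<and> cp p p = 1 \<and> (\<forall>i. i \<notin> insert p Q \<longrightarrow> cp p i = 0)"
    by metis
  have cp0: "cp p' p = 0" if "p \<in> P" "p' \<in> P" "p \<noteq> p'" for p p'
    using cp[OF that(2)] that by (auto simp: P_def)
  have inj: "inj_on cp P"
  proof (rule inj_onI)
    fix p p' assume "p \<in> P" "p' \<in> P" "cp p = cp p'"
    then show "p = p'" using cp cp0 by (metis zero_neq_one)
  qed
  have fP: "finite P" by (simp add: P_def)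
  define B where "B = cp ` P"
  have BC: "B \<subseteq> C" using cp by (auto simp: B_def)
  have ind: "vs.independent B"
  proof (rule vs.independent_if_scalars_zero)
    show "finite B" using fP by (simp add: B_def)
  next
    fix f y assume s: "(\<Sum>x\<in>B. vscale (f x) x) = 0" and y: "y \<in> B"
    then obtain p where p: "p \<in> P" "y = cp p" by (auto simp: B_def)
    have "0 = (\<Sum>x\<in>B. vscale (f x) x) p" using s by simp
    also have "\<dots> = (\<Sum>x\<in>B. f x * x p)" by (simp add: sum_fun_apply)
    also have "\<dots> = (\<Sum>p'\<in>P. f (cp p') * cp p' p)" by (simp add: B_def sum.reindex[OF inj])
    also have "\<dots> = f (cp p) * cp p p"
      using fP p cp0 by (subst sum.remove[of _ p]) (auto intro!: sum.neutral)
    finally show "f y = 0" using cp p by simp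
  qed
  have span: "C \<subseteq> vs.span B"
  proof
    fix c assume c: "c \<in> C"
    define s where "s = (\<Sum>p\<in>P. vscale (c p) (cp p))"
    have sC: "s \<in> C" unfolding s_def
      using cp by (intro vs.subspace_sum[OF subC] vs.subspace_scale[OF subC]) auto
    have "c - s \<in> C" using vs.subspace_diff[OF subC c sC] .
    moreover have "(c - s) i = 0" if "i \<notin> Q" for i
    proof (cases "i \<in> P")
      case True
      have "s i = (\<Sum>p\<in>P. c p * cp p i)" by (simp add: s_def sum_fun_apply)
      also have "\<dots> = c i * cp i i"
        using fP True cp0 by (subst sum.remove[of _ i]) (auto intro!: sum.neutral)
      finally show ?thesis using cp True by simp
    next
      case False
      then have "i \<ge> n" using that by (auto simp: P_def)
      then have "c i = 0" "\<forall>p\<in>P. cp p i = 0" using C_words c cp by auto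
      then show ?thesis by (simp add: s_def sum_fun_apply)
    qed
    ultimately have "c - s = 0" using injQ by blast
    then have "c = s" by simp
    moreover have "s \<in> vs.span B" unfolding s_def B_def
      by (intro vs.span_sum vs.span_scale vs.span_base) auto
    ultimately show "c \<in> vs.span B" by simp
  qed
  have "card B = vs.dim C" using vs.basis_card_eq_dim[OF BC span ind] .
  moreover have "card B = card P" using card_image[OF inj] by (simp add: B_def)
  moreover have "card P = n - card Q" using Q_sub by (simp add: P_def card_Diff_subset fQ)
  ultimately show ?thesis by simp
qed

end

theorem theorem4:
  fixes k r \<delta> n d :: nat
  assumes "0 < k" "0 < r" "0 < \<delta>"
    and n_def: "n = nat \<lceil>real k / real r\<rceil> * (r + \<delta> - 1)"
    and d_def: "int d = int n - int k + 1 - (\<lceil>real k / real r\<rceil> - 1) * (int \<delta> - 1)"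
    and "\<delta> \<le> d"
    and "card (UNIV :: 'a set) > n"
  shows "\<exists>C :: (nat \<Rightarrow> 'a::{field,finite}) set. linear_code n C \<and> code_dim C = k \<and> min_dist C = d
           \<and> all_symbol_locality n C r \<delta>"
proof -
  define m where "m = nat \<lceil>real k / real r\<rceil>"
  define g where "g = r + \<delta> - 1"
  have kpos: "0 < real k / real r" using assms by simp
  then have cpos: "0 < \<lceil>real k / real r\<rceil>" by simp
  then have cm: "\<lceil>real k / real r\<rceil> = int m" by (simp add: m_def)
  have cc: "real m - 1 < real k / real r \<and> real k / real r \<le> real m"
    using ceiling_correct[of "real k / real r"] cm by simp
  then have "real k / real r \<le> real m" by simp
  then have kle: "k \<le> m * r" using assms(2) by (simp add: divide_le_eq of_nat_mult[symmetric] del: of_nat_mult)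
  have "real m < real k / real r + 1" using cc by simp
  then have "real m * real r < real k + real r" using assms(2) by (simp add: field_simps)
  then have klt: "m * r < k + r" by (metis of_nat_add of_nat_less_iff of_nat_mult)
  have mpos: "0 < m" using cpos by (simp add: m_def)
  define e where "e = m * r - k"
  have er: "e < r" using klt kle by (simp add: e_def)
  have nmg: "n = m * g" using n_def by (simp add: m_def g_def)
  have dval: "d = \<delta> + e"
  proof -
    have "int d = int n - int k + 1 - (int m - 1) * (int \<delta> - 1)" using d_def cm by simp
    also have "int n = int m * int r + int m * (int \<delta> - 1)"
    proof -
      have "g = r + (\<delta> - 1)" using assms(3) by (simp add: g_def)
      then have "n = m * r + m * (\<delta> - 1)" using nmg by (simp add: distrib_left)
      then show ?thesis using assms(3) by (simp add: of_nat_diff)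
    qed
    finally have "int d = int m * int r - int k + int \<delta>" by (simp add: algebra_simps)
    then have "int d = int (\<delta> + (m * r - k))" using kle by (simp add: of_nat_diff)
    then show ?thesis unfolding e_def by linarith
  qed
  have "card {0..<n} \<le> card (UNIV :: 'a set)" using assms(7) by simp
  from card_le_inj[OF _ _ this] obtain \<alpha> :: "nat \<Rightarrow> 'a" where "inj_on \<alpha> {0..<n}" by auto
  then have injm: "inj_on \<alpha> {0..<m*g}" using nmg by simp
  interpret L: lrc \<alpha> m g \<delta> e
    using injm assms(3) er mpos by unfold_locales (auto simp: g_def)
  have Ln: "L.n = n" using nmg by (simp add: L.n_def)
  have Ld: "L.d = d" using dval by (simp add: L.d_def)
  have "linear_code n L.C"
    unfolding linear_code_def using L.subC L.C_def Ln by auto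
  moreover have "code_dim L.C = k"
  proof -
    have "code_dim L.C = n - (m * (\<delta> - 1) + e)" using L.dim_C L.card_Q Ln by (simp add: code_dim_def)
    also have "n = m * r + m * (\<delta> - 1)"
    proof -
      have "g = r + (\<delta> - 1)" using assms(3) by (simp add: g_def)
      then show ?thesis using nmg by (simp add: distrib_left)
    qed
    finally show ?thesis using kle by (simp add: e_def)
  qed
  moreover have "min_dist L.C = d"
  proof -
    define A where "A = {wt x |x. x \<in> L.C \<and> x \<noteq> 0}"
    have "A \<subseteq> {0..n}"
    proof
      fix w assume "w \<in> A"
      then obtain x where x: "x \<in> L.C" "w = wt x" by (auto simp: A_def)
      have "card {i. x i \<noteq> 0} \<le> card {0..<n}"
        using L.C_supp[OF x(1)] Ln by (intro card_mono) auto
      then show "w \<in> {0..n}" using x by (simp add: wt_def)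
    qed
    then have fA: "finite A" using finite_subset by blast
    have "d \<in> A"
    proof -
      obtain x where "x \<in> L.C" "x \<noteq> 0" "wt x = d" using L.weight_d Ld by auto
      then show ?thesis unfolding A_def by blast
    qed
    moreover have "d \<le> w" if "w \<in> A" for w
      using that L.Dist Ld by (force simp: A_def wt_def)
    ultimately have "Min A = d" using fA by (intro Min_eqI) auto
    then show ?thesis by (simp add: min_dist_def A_def)
  qed
  moreover have "all_symbol_locality n L.C r \<delta>"
    unfolding all_symbol_locality_def
  proof (intro allI impI)
    fix i assume i: "i < n"
    define j where "j = i div g"
    define S where "S = {j*g..<j*g+g}"
    have jm: "j < m" using i nmg L.gpos by (simp add: j_def less_mult_imp_div_less)
    have "S \<subseteq> {0..<n}"
      using mult_le_mono1[of "Suc j" m g] jm nmg by (auto simp: S_def)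
    moreover have "i \<in> S" using div_block[OF L.gpos, of i j] by (simp add: S_def j_def)
    moreover have "card S \<le> r + \<delta> - 1" by (simp add: S_def g_def)
    moreover have "min_dist_ge (puncture L.C S) \<delta>"
      unfolding min_dist_ge_def puncture_def
    proof clarify
      fix c assume c: "c \<in> L.C" and nz: "(\<lambda>i. if i \<in> S then c i else 0) \<noteq> 0"
      have eq: "{i'. (if i' \<in> S then c i' else 0) \<noteq> 0} = {i'. c i' \<noteq> 0} \<inter> S" by auto
      show "\<delta> \<le> wt (\<lambda>i. if i \<in> S then c i else 0)"
      proof (rule ccontr)
        assume "\<not> \<delta> \<le> wt (\<lambda>i. if i \<in> S then c i else 0)"
        then have "card ({i'. c i' \<noteq> 0} \<inter> S) < \<delta>" by (simp add: wt_def eq)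
        then have "\<forall>i\<in>S. c i = 0" using L.Loc[OF c jm] unfolding S_def by blast
        then have "(\<lambda>i. if i \<in> S then c i else 0) = 0" by (intro ext) auto
        then show False using nz by blast
      qed
    qed
    ultimately show "has_locality n L.C r \<delta> i" unfolding has_locality_def by blast
  qed
  ultimately show ?thesis by blast
qed

end
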